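(* Let $C>1$, $P$ a probability measure on $[0,\infty)$ with $\mu_{P,C}>0$, and $\alpha>0$ such that $\alpha\,\mu_{P,C}\le\mathbb{E}_{t\sim P}\big[t\,\mathbf 1[t<m_P]\big]$. Then: (a) $G_{P,C}(\mu)\ge\alpha\mu$ for $0\le\mu\le\frac{\mu_{P,C}}2$; (b) $G_{P,C}(\mu)\ge\alpha(\mu_{P,C}-\mu)$ for $\frac{\mu_{P,C}}2\le\mu\le\mu_{P,C}$; (c) $G_{P,C}(\mu)\le-\alpha(\mu-\mu_{P,C})$ for $\mu\ge\mu_{P,C}$.
   Context: For $\mu\ge0$ define $G_{P,C}(\mu):=\mathbb{E}_{t\sim P}[\min\{t,C\mu\}]-\mu$. The $C$-clipped mean $\mu_{P,C}$ is the largest $\mu\ge0$ with $G_{P,C}(\mu)=0$. The $\frac1C$-median is $m_P:=\sup\{M\ge0:\mathbb{P}_{t\sim P}[t\ge M]\ge\frac1C\}$. *)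

theory Defs
  imports "HOL-Probability.Probability"
begin

text \<open>P is modelled as a probability measure M on the Borel reals, concentrated on [0,\<infinity>).\<close>

definition clipG :: "real measure \<Rightarrow> real \<Rightarrow> real \<Rightarrow> real" where
  "clipG M C mu = (\<integral>t. min t (C * mu) \<partial>M) - mu"

definition clipped_mean :: "real measure \<Rightarrow> real \<Rightarrow> real" where
  "clipped_mean M C = (GREATEST mu. mu \<ge> 0 \<and> clipG M C mu = 0)"

definition inv_median :: "real measure \<Rightarrow> real \<Rightarrow> real" where
  "inv_median M C = Sup {m. m \<ge> 0 \<and> measure M {t \<in> space M. t \<ge> m} \<ge> 1 / C}"

end

theory Submission
  imports Defs
begin

locale CS = prob_space M for M :: "real measure" +
  assumes sb: "sets M = sets borel" and nn: "AE t in M. t \<ge> 0"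
begin

lemma sp: "space M = UNIV" using sets_eq_imp_space_eq[OF sb] by simp

lemma measM: "f \<in> borel_measurable borel \<Longrightarrow> f \<in> borel_measurable M"
  using measurable_cong_sets[OF sb refl] by blast

lemma setsM: "A \<in> sets borel \<Longrightarrow> A \<in> sets M" using sb by simp

lemma intB: "(f::real\<Rightarrow>real) \<in> borel_measurable borel \<Longrightarrow> AE t in M. \<bar>f t\<bar> \<le> B \<Longrightarrow> integrable M f"
  by (rule integrable_const_bound[where B=B]) (auto intro: measM)

lemma int_min: "integrable M (\<lambda>t. min t c)"
  by (rule intB[where B="\<bar>c\<bar>"]) (use nn in auto)

lemma int_ind: "A \<in> sets borel \<Longrightarrow> integrable M (\<lambda>t. (c::real) * indicator A t)"
  by (rule intB[where B="\<bar>c\<bar>"]) (auto simp: indicator_def)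

lemma int_tind: "integrable M (\<lambda>t. t * indicator {..<m} t)"
  by (rule intB[where B="\<bar>m\<bar>"]) (use nn in \<open>auto simp: indicator_def\<close>)

lemma integ_ind: "A \<in> sets borel \<Longrightarrow> (\<integral>t. (c::real) * indicator A t \<partial>M) = c * measure M A"
  by (simp add: sp)

lemma int_le_const: "integrable M f \<Longrightarrow> integrable M g \<Longrightarrow> AE t in M. f t \<le> g t + (c::real) \<Longrightarrow> (\<integral>t. f t \<partial>M) \<le> (\<integral>t. g t \<partial>M) + c"
proof -
  assume a: "integrable M f" "integrable M g" "AE t in M. f t \<le> g t + (c::real)"
  have "(\<integral>t. f t \<partial>M) \<le> (\<integral>t. g t + c \<partial>M)"
    by (rule integral_mono_AE) (use a in auto)
  also have "\<dots> = (\<integral>t. g t \<partial>M) + c" using a by (simp add: prob_space)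
  finally show ?thesis .
qed

lemma lip: "\<bar>clipG M C a - clipG M C b\<bar> \<le> (\<bar>C\<bar> + 1) * \<bar>a - b\<bar>"
proof -
  have d: "\<bar>C*a - C*b\<bar> = \<bar>C\<bar> * \<bar>a - b\<bar>" by (metis abs_mult right_diff_distrib)
  have "(\<integral>t. min t (C*a) \<partial>M) \<le> (\<integral>t. min t (C*b) \<partial>M) + \<bar>C*a - C*b\<bar>"
    by (rule int_le_const) (auto simp: int_min)
  moreover have "(\<integral>t. min t (C*b) \<partial>M) \<le> (\<integral>t. min t (C*a) \<partial>M) + \<bar>C*a - C*b\<bar>"
    by (rule int_le_const) (auto simp: int_min)
  ultimately show ?thesis unfolding clipG_def d by (auto simp: abs_le_iff algebra_simps)
qed

lemma tailK: assumes "e > 0" shows "\<exists>K\<ge>0. prob {t. K < t} < e"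
proof -
  let ?A = "\<lambda>n::nat. {t::real. real n < t}"
  have "(\<lambda>n. prob (?A n)) \<longlonglongrightarrow> prob (\<Inter>i. ?A i)"
    by (rule finite_Lim_measure_decseq) (auto simp: setsM decseq_def)
  moreover have "(\<Inter>i. ?A i) = {}"
    by (auto simp: not_less) (meson reals_Archimedean2 less_asym)
  ultimately have "(\<lambda>n. prob (?A n)) \<longlonglongrightarrow> 0" by simp
  then have "eventually (\<lambda>n. prob (?A n) < e) sequentially"
    using assms by (rule order_tendstoD)
  then obtain n where "prob (?A n) < e" by (auto simp: eventually_sequentially)
  then show ?thesis by (intro exI[of _ "real n"]) auto
qed

lemma G0: "clipG M C 0 = 0"
  unfolding clipG_def by (simp, rule integral_eq_zero_AE) (use nn in auto)

lemma cm: assumes C: "C > 1" shows "clipped_mean M C \<ge> 0 \<and> clipG M C (clipped_mean M C) = 0"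
proof -
  obtain K where K: "K \<ge> 0" "prob {t. K < t} < 1/C" using tailK[of "1/C"] C by auto
  define p where "p = prob {t. K < t}"
  have Cp: "C * p < 1" using K C unfolding p_def by (simp add: field_simps)
  have ub: "clipG M C mu \<le> K + mu * (C * p - 1)" if "mu \<ge> 0" for mu
  proof -
    have "(\<integral>t. min t (C*mu) \<partial>M) \<le> (\<integral>t. (C*mu) * indicator {K<..} t \<partial>M) + K"
      by (rule int_le_const[OF int_min int_ind]) (use nn that C K in \<open>auto simp: indicator_def\<close>)
    also have "\<dots> = C * mu * p + K" unfolding p_def
      by (subst integ_ind) (auto simp: greaterThan_def)
    finally show ?thesis unfolding clipG_def by (simp add: algebra_simps)
  qed
  define Z where "Z = {mu. mu \<ge> 0 \<and> clipG M C mu = 0}"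
  have Zb: "mu \<le> K / (1 - C*p)" if "mu \<in> Z" for mu
  proof -
    have "0 \<le> K + mu * (C * p - 1)" using ub[of mu] that unfolding Z_def by auto
    then have "mu * (1 - C*p) \<le> K" by (simp add: algebra_simps)
    then show ?thesis using Cp by (simp add: field_simps)
  qed
  have Z0: "0 \<in> Z" unfolding Z_def using G0 by auto
  have bdd: "bdd_above Z" by (rule bdd_aboveI[of _ "K / (1 - C*p)"]) (rule Zb)
  define s where "s = Sup Z"
  have s0: "s \<ge> 0" unfolding s_def using Z0 bdd by (rule cSup_upper)
  have Gs: "clipG M C s = 0"
  proof -
    have "\<bar>clipG M C s\<bar> \<le> 0"
    proof (rule field_le_epsilon)
      fix e :: real assume e: "e > 0"
      have "s - e/(C+1) < s" using e C by simp
      then obtain z where z: "z \<in> Z" "s - e/(C+1) < z" unfolding s_def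
        using less_cSup_iff[OF _ bdd] Z0 by blast
      have zs: "z \<le> s" unfolding s_def using z(1) bdd by (rule cSup_upper)
      have "\<bar>clipG M C s - clipG M C z\<bar> \<le> (\<bar>C\<bar> + 1) * \<bar>s - z\<bar>" by (rule lip)
      also have "\<dots> = (C+1) * (s - z)" using C zs by simp
      also have "\<dots> \<le> (C+1) * (e/(C+1))" using z(2) C by (intro mult_left_mono) auto
      also have "\<dots> = e" using C by simp
      finally show "\<bar>clipG M C s\<bar> \<le> 0 + e" using z(1) unfolding Z_def by simp
    qed
    then show ?thesis by simp
  qed
  have "clipped_mean M C = s" unfolding clipped_mean_def
  proof (rule Greatest_equality)
    show "0 \<le> s \<and> clipG M C s = 0" using s0 Gs by simp
    fix y assume "0 \<le> y \<and> clipG M C y = 0"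
    then have "y \<in> Z" unfolding Z_def by simp
    then show "y \<le> s" unfolding s_def using bdd by (rule cSup_upper)
  qed
  then show ?thesis using s0 Gs by simp
qed

lemma med: assumes C: "C > 1" shows "inv_median M C \<ge> 0 \<and> prob {t. inv_median M C \<le> t} \<ge> 1/C"
proof -
  define S where "S = {m. m \<ge> 0 \<and> prob {t. m \<le> t} \<ge> 1/C}"
  have mS: "inv_median M C = Sup S" unfolding inv_median_def S_def sp by simp
  obtain K where K: "K \<ge> 0" "prob {t. K < t} < 1/C" using tailK[of "1/C"] C by auto
  have Sb: "s \<le> K" if "s \<in> S" for s
  proof (rule ccontr)
    assume "\<not> s \<le> K"
    then have "prob {t. s \<le> t} \<le> prob {t. K < t}"
      by (intro finite_measure_mono) (auto simp: setsM)
    then show False using that K unfolding S_def by auto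
  qed
  have "prob {t. 0 \<le> t} = 1"
    using prob_Collect_eq_1[of "\<lambda>t. 0 \<le> t"] nn by (simp add: sp setsM)
  then have S0: "0 \<in> S" unfolding S_def using C by simp
  have bdd: "bdd_above S" by (rule bdd_aboveI[of _ K]) (rule Sb)
  define m where "m = Sup S"
  have m0: "m \<ge> 0" unfolding m_def using S0 bdd by (rule cSup_upper)
  let ?A = "\<lambda>n::nat. {t::real. m - inverse (real (Suc n)) \<le> t}"
  have "(\<lambda>n. prob (?A n)) \<longlonglongrightarrow> prob (\<Inter>i. ?A i)"
  proof (rule finite_Lim_measure_decseq)
    show "range ?A \<subseteq> events" by (auto simp: setsM)
    show "decseq ?A" unfolding decseq_def
    proof (intro allI impI subsetI)
      fix i j :: nat and x assume "i \<le> j" "x \<in> ?A j"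
      moreover have "inverse (real (Suc j)) \<le> inverse (real (Suc i))" using \<open>i \<le> j\<close>
        by (simp add: field_simps)
      ultimately show "x \<in> ?A i" by (simp only: mem_Collect_eq)
    qed
  qed
  moreover have "(\<Inter>i. ?A i) = {t. m \<le> t}"
  proof (intro set_eqI iffI)
    fix t assume "t \<in> (\<Inter>i. ?A i)"
    show "t \<in> {t. m \<le> t}"
    proof (rule ccontr)
      assume "t \<notin> {t. m \<le> t}"
      then have "0 < m - t" by simp
      then obtain n where "inverse (real (Suc n)) < m - t" using reals_Archimedean by blast
      with \<open>t \<in> (\<Inter>i. ?A i)\<close> show False by (metis (no_types, lifting) INT_iff UNIV_I diff_le_eq mem_Collect_eq add.commute not_le)
    qed
  next
    fix t assume "t \<in> {t. m \<le> t}"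
    then show "t \<in> (\<Inter>i. ?A i)" by auto (smt (verit) inverse_positive_iff_positive of_nat_0_le_iff)
  qed
  ultimately have lim: "(\<lambda>n. prob (?A n)) \<longlonglongrightarrow> prob {t. m \<le> t}" by simp
  have "1/C \<le> prob (?A n)" for n
  proof -
    have "m - inverse (real (Suc n)) < m" by simp
    then obtain s where s: "s \<in> S" "m - inverse (real (Suc n)) < s"
      unfolding m_def using less_cSup_iff[OF _ bdd] S0 by blast
    have "prob {t. s \<le> t} \<le> prob (?A n)"
      using s(2) by (intro finite_measure_mono) (auto simp: setsM)
    then show ?thesis using s(1) unfolding S_def by auto
  qed
  then have "1/C \<le> prob {t. m \<le> t}" using lim by (intro LIMSEQ_le_const) auto
  then show ?thesis using m0 mS m_def by simp
qed

lemma int_ind1: "A \<in> sets borel \<Longrightarrow> integrable M (indicator A :: real \<Rightarrow> real)"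
  using int_ind[of A 1] by simp

lemma lin1: "integrable M f \<Longrightarrow> integrable M g \<Longrightarrow> AE t in M. (a::real) * g t \<le> f t
  \<Longrightarrow> a * (\<integral>t. g t \<partial>M) \<le> (\<integral>t. f t \<partial>M)"
proof -
  assume h: "integrable M f" "integrable M g" "AE t in M. (a::real) * g t \<le> f t"
  have "a * (\<integral>t. g t \<partial>M) = (\<integral>t. a * g t \<partial>M)" by simp
  also have "\<dots> \<le> (\<integral>t. f t \<partial>M)" by (rule integral_mono_AE) (use h in auto)
  finally show ?thesis .
qed

lemma lin2: "integrable M f \<Longrightarrow> integrable M g \<Longrightarrow> integrable M h \<Longrightarrow>
  AE t in M. (a::real) * g t + b * h t \<le> f t
  \<Longrightarrow> a * (\<integral>t. g t \<partial>M) + b * (\<integral>t. h t \<partial>M) \<le> (\<integral>t. f t \<partial>M)"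
proof -
  assume i: "integrable M f" "integrable M g" "integrable M h" "AE t in M. (a::real) * g t + b * h t \<le> f t"
  have "a * (\<integral>t. g t \<partial>M) + b * (\<integral>t. h t \<partial>M) = (\<integral>t. a * g t + b * h t \<partial>M)"
    using i by simp
  also have "\<dots> \<le> (\<integral>t. f t \<partial>M)" by (rule integral_mono_AE) (use i in auto)
  finally show ?thesis .
qed

lemma lin2u: "integrable M f \<Longrightarrow> integrable M g \<Longrightarrow> integrable M h \<Longrightarrow>
  AE t in M. f t \<le> (a::real) * g t + b * h t
  \<Longrightarrow> (\<integral>t. f t \<partial>M) \<le> a * (\<integral>t. g t \<partial>M) + b * (\<integral>t. h t \<partial>M)"
proof -
  assume i: "integrable M f" "integrable M g" "integrable M h" "AE t in M. f t \<le> (a::real) * g t + b * h t"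
  have "(\<integral>t. f t \<partial>M) \<le> (\<integral>t. a * g t + b * h t \<partial>M)" by (rule integral_mono_AE) (use i in auto)
  also have "\<dots> = a * (\<integral>t. g t \<partial>M) + b * (\<integral>t. h t \<partial>M)" using i by simp
  finally show ?thesis .
qed

lemma pr: "A \<in> sets borel \<Longrightarrow> (\<integral>t. indicator A t \<partial>M) = prob A" by (simp add: sp)
end

lemma minconc: "0 \<le> (l::real) \<Longrightarrow> l \<le> 1 \<Longrightarrow> l*min t a + (1-l)*min t b \<le> min t (l*a+(1-l)*b)"
proof -
  assume l: "0 \<le> l" "l \<le> 1"
  have "l*min t a \<le> l*t" "l*min t a \<le> l*a" using l by (auto intro: mult_left_mono)
  moreover have "(1-l)*min t b \<le> (1-l)*t" "(1-l)*min t b \<le> (1-l)*b" using l by (auto intro: mult_left_mono)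
  ultimately show ?thesis by (simp add: algebra_simps)
qed

context CS begin

lemma main:
  assumes C: "C > 1" and mpos: "clipped_mean M C > 0" and a: "\<alpha> > 0"
    and hyp: "\<alpha> * clipped_mean M C \<le> (\<integral>t. t * indicator {..<inv_median M C} t \<partial>M)"
  shows "(\<forall>mu. 0 \<le> mu \<and> mu \<le> clipped_mean M C / 2 \<longrightarrow> clipG M C mu \<ge> \<alpha> * mu)
       \<and> (\<forall>mu. clipped_mean M C / 2 \<le> mu \<and> mu \<le> clipped_mean M C
            \<longrightarrow> clipG M C mu \<ge> \<alpha> * (clipped_mean M C - mu))
       \<and> (\<forall>mu. mu \<ge> clipped_mean M C \<longrightarrow> clipG M C mu \<le> - \<alpha> * (mu - clipped_mean M C))"
proof -
  define ms where "ms = clipped_mean M C"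
  define m where "m = inv_median M C"
  define x where "x = C * ms"
  define T where "T = (\<integral>t. t * indicator {..<m} t \<partial>M)"
  have ms0: "ms > 0" using mpos ms_def by simp
  have x0: "x > 0" using ms0 C x_def by simp
  have Ex: "(\<integral>t. min t x \<partial>M) = ms" using cm[OF C] unfolding ms_def x_def clipG_def by simp
  have m0: "m \<ge> 0" and qm: "prob {m..} \<ge> 1/C" using med[OF C] unfolding m_def atLeast_def by auto
  have Tge: "T \<ge> \<alpha> * ms" using hyp unfolding T_def m_def ms_def by simp
  have Tpos: "T > 0" using Tge a ms0 by (smt (verit) mult_pos_pos)
  have xC: "x * (1/C) = ms" using C unfolding x_def by simp
  have I1: "integrable M (\<lambda>t. min t c)" for c by (rule int_min)
  have I2: "integrable M (\<lambda>t. t * indicator {..<m} t)" by (rule int_tind)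
  have I3: "integrable M (indicator {m..} :: real \<Rightarrow> real)" by (rule int_ind1) simp
  have I4: "integrable M (indicator {x<..} :: real \<Rightarrow> real)" by (rule int_ind1) simp
  have mx: "m \<le> x"
  proof (rule ccontr)
    assume "\<not> m \<le> x"
    then have xm: "x < m" by simp
    then have mp: "m > 0" using x0 by simp
    have "x * prob {m..} + (x/m) * T \<le> (\<integral>t. min t x \<partial>M)"
      unfolding T_def pr[of "{m..}", symmetric, OF atLeast_borel]
    proof (rule lin2[OF I1 I3 I2])
      show "AE t in M. x * indicator {m..} t + x / m * (t * indicator {..<m} t) \<le> min t x"
        using nn
      proof eventually_elim
        case (elim t)
        show ?case
        proof (cases "m \<le> t")
          case True then show ?thesis using xm by (simp add: indicator_def)
        next
          case False
          have "x / m * t \<le> t" using xm mp elim by (simp add: field_simps) (metis less_imp_le mult.commute mult_right_mono)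
          moreover have "x / m * t \<le> x" using False mp x0 by (simp add: field_simps mult_left_mono)
          ultimately show ?thesis using False by (simp add: indicator_def)
        qed
      qed
    qed
    moreover have "x * prob {m..} \<ge> x * (1/C)" using qm x0 by (intro mult_left_mono) auto
    moreover have "(x/m) * T > 0" using x0 mp Tpos by simp
    ultimately show False using Ex xC by linarith
  qed
  define q where "q = prob {x<..}"
  have "1 * T + x * q \<le> (\<integral>t. min t x \<partial>M)"
    unfolding T_def q_def pr[of "{x<..}", symmetric, OF greaterThan_borel]
  proof (rule lin2[OF I1 I2 I4])
    show "AE t in M. 1 * (t * indicator {..<m} t) + x * indicator {x<..} t \<le> min t x"
      using nn by eventually_elim (use mx in \<open>auto simp: indicator_def\<close>)
  qed
  then have "\<alpha> * ms + C * ms * q \<le> ms" using Ex Tge x_def by simp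
  then have "ms * (\<alpha> + C * q) \<le> ms * 1" by (simp add: algebra_simps)
  then have aq: "\<alpha> + C * q \<le> 1" using ms0 by (simp add: mult_le_cancel_left_pos)
  have partc: "clipG M C mu \<le> - \<alpha> * (mu - ms)" if "mu \<ge> ms" for mu
  proof -
    have "(\<integral>t. min t (C*mu) \<partial>M) \<le> 1 * (\<integral>t. min t x \<partial>M) + (C*(mu-ms)) * (\<integral>t. indicator {x<..} t \<partial>M)"
    proof (rule lin2u[OF I1 I1 I4])
      have "C*mu = x + C*(mu-ms)" unfolding x_def by (simp add: algebra_simps)
      moreover have "C*(mu-ms) \<ge> 0" using that C by simp
      ultimately show "AE t in M. min t (C * mu) \<le> 1 * min t x + C * (mu - ms) * indicator {x<..} t"
        by (intro AE_I2) (auto simp: indicator_def)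
    qed
    then have "clipG M C mu \<le> ms + C*(mu-ms)*q - mu" unfolding clipG_def q_def Ex
      by (simp add: sp)
    also have "\<dots> = (mu - ms) * (C*q - 1)" by (simp add: algebra_simps)
    also have "\<dots> \<le> (mu - ms) * (-\<alpha>)" using that aq by (intro mult_left_mono) auto
    finally show ?thesis by (simp add: mult.commute)
  qed
  define y where "y = C * (ms/2)"
  have Ey: "T/2 + ms/2 \<le> (\<integral>t. min t y \<partial>M)"
  proof (cases "x/2 \<le> m")
    case True
    have "(1/2) * T + (x/2) * prob {m..} \<le> (\<integral>t. min t y \<partial>M)"
      unfolding T_def pr[of "{m..}", symmetric, OF atLeast_borel]
    proof (rule lin2[OF I1 I2 I3])
      show "AE t in M. 1 / 2 * (t * indicator {..<m} t) + x / 2 * indicator {m..} t \<le> min t y"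
        using nn by eventually_elim (use mx True in \<open>auto simp: indicator_def y_def x_def\<close>)
    qed
    moreover have "(x/2) * prob {m..} \<ge> (x/2) * (1/C)" using qm x0 by (intro mult_left_mono) auto
    ultimately show ?thesis using xC by linarith
  next
    case False
    have "(1/2) * (\<integral>t. min t x \<partial>M) + (1/2) * T \<le> (\<integral>t. min t y \<partial>M)"
      unfolding T_def
    proof (rule lin2[OF I1 I1 I2])
      show "AE t in M. 1 / 2 * min t x + 1 / 2 * (t * indicator {..<m} t) \<le> min t y"
        using nn by eventually_elim (use mx False in \<open>auto simp: indicator_def y_def x_def\<close>)
    qed
    then show ?thesis using Ex by simp
  qed
  have parta: "clipG M C mu \<ge> \<alpha> * mu" if "0 \<le> mu" "mu \<le> ms/2" for mu
  proof -
    define l where "l = 2*mu/ms"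
    have l: "0 \<le> l" "l \<le> 1" using that ms0 unfolding l_def by (auto simp: field_simps)
    have lms: "l * (ms/2) = mu" unfolding l_def using ms0 by simp
    have "l * (\<integral>t. min t y \<partial>M) \<le> (\<integral>t. min t (C*mu) \<partial>M)"
    proof (rule lin1[OF I1 I1])
      show "AE t in M. l * min t y \<le> min t (C * mu)"
        using nn
      proof eventually_elim
        case (elim t)
        have "l * min t y + (1-l) * min t 0 \<le> min t (l*y + (1-l)*0)" by (rule minconc[OF l])
        moreover have "l*y = C*mu" unfolding y_def using lms by (simp add: algebra_simps)
        ultimately show ?case using elim by simp
      qed
    qed
    then have "clipG M C mu \<ge> l * (T/2 + ms/2) - mu" unfolding clipG_def
      using Ey l(1) by (smt (verit) mult_left_mono)
    moreover have "l * (T/2 + ms/2) - mu = l * (T/2)" using lms by (simp add: algebra_simps)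
    moreover have "l * (T/2) \<ge> l * (\<alpha> * ms / 2)" using Tge l by (intro mult_left_mono) auto
    moreover have "l * (\<alpha> * ms / 2) = \<alpha> * mu" using lms by (simp add: algebra_simps)
    ultimately show ?thesis by linarith
  qed
  have partb: "clipG M C mu \<ge> \<alpha> * (ms - mu)" if "ms/2 \<le> mu" "mu \<le> ms" for mu
  proof -
    define l where "l = 2*(ms-mu)/ms"
    have l: "0 \<le> l" "l \<le> 1" using that ms0 unfolding l_def by (auto simp: field_simps)
    have lms: "l * (ms/2) = ms - mu" unfolding l_def using ms0 by simp
    have "l * (\<integral>t. min t y \<partial>M) + (1-l) * (\<integral>t. min t x \<partial>M) \<le> (\<integral>t. min t (C*mu) \<partial>M)"
    proof (rule lin2[OF I1 I1 I1])
      show "AE t in M. l * min t y + (1-l) * min t x \<le> min t (C * mu)"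
      proof (intro AE_I2)
        fix t
        have "l * min t y + (1-l) * min t x \<le> min t (l*y + (1-l)*x)" by (rule minconc[OF l])
        moreover have "l*y + (1-l)*x = C*mu" unfolding y_def x_def
        proof -
          have "l * (C * (ms / 2)) + (1 - l) * (C * ms) = C * (l * (ms/2) + ms - 2 * (l * (ms/2)))"
            by (simp add: algebra_simps)
          also have "l * (ms/2) + ms - 2 * (l * (ms/2)) = mu" using lms by linarith
          then have "C * (l * (ms/2) + ms - 2 * (l * (ms/2))) = C * mu" by simp
          finally show "l * (C * (ms / 2)) + (1 - l) * (C * ms) = C * mu" .
        qed
        ultimately show "l * min t y + (1-l) * min t x \<le> min t (C * mu)" by simp
      qed
    qed
    then have "clipG M C mu \<ge> l * (T/2 + ms/2) + (1-l) * ms - mu" unfolding clipG_def Ex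
      using Ey l(1) by (smt (verit) mult_left_mono)
    moreover have "l * (T/2 + ms/2) + (1-l) * ms - mu = l * (T/2)"
    proof -
      have "l * ms = 2 * (ms - mu)" using lms by (simp add: algebra_simps)
      then show ?thesis by (simp add: algebra_simps)
    qed
    moreover have "l * (T/2) \<ge> l * (\<alpha> * ms / 2)" using Tge l by (intro mult_left_mono) auto
    moreover have "l * (\<alpha> * ms / 2) = \<alpha> * (l * (ms/2))" by (simp add: algebra_simps)
    then have "l * (\<alpha> * ms / 2) = \<alpha> * (ms - mu)" using lms by simp
    ultimately show ?thesis by linarith
  qed
  show ?thesis using parta partb partc unfolding ms_def by auto
qed

end

theorem mainTheorem18:
  fixes M :: "real measure" and C \<alpha> :: real
  assumes "prob_space M"
    and "sets M = sets borel"
    and "AE t in M. t \<ge> 0"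
    and "C > 1"
    and "clipped_mean M C > 0"
    and "\<alpha> > 0"
    and "\<alpha> * clipped_mean M C \<le> (\<integral>t. t * indicator {..<inv_median M C} t \<partial>M)"
  shows "(\<forall>mu. 0 \<le> mu \<and> mu \<le> clipped_mean M C / 2 \<longrightarrow> clipG M C mu \<ge> \<alpha> * mu)
       \<and> (\<forall>mu. clipped_mean M C / 2 \<le> mu \<and> mu \<le> clipped_mean M C
            \<longrightarrow> clipG M C mu \<ge> \<alpha> * (clipped_mean M C - mu))
       \<and> (\<forall>mu. mu \<ge> clipped_mean M C \<longrightarrow> clipG M C mu \<le> - \<alpha> * (mu - clipped_mean M C))"
  proof -
  interpret CS M using assms(1,2,3) by (simp add: CS_def CS_axioms_def)
  show ?thesis by (rule main) (use assms in auto)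
qed

end
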